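(* Consider the discrete-time control system $x_{k+1}=f(x_k,u_k)$ with reward $r(x,u)=R-x^TQx$ under the standing assumptions (A1)–(A3) in the context. Let $\pi^\star$ be an optimal (feedback) policy for the discounted objective $\mathbf J^{\mathbf u}_\gamma$. Then there exists $\gamma^\star\in(0,1)$ such that for every $\gamma\in(\gamma^\star,1)$ the origin is an asymptotically stable equilibrium of the closed-loop system $x_{n+1}=f(x_n,\pi^\star(x_n))$.
   Context: System: $x_{k+1}=f(x_k,u_k)$, $x_k\in\mathbb R^n$, $u_k\in\mathcal U\subset\mathbb R^m$, origin an equilibrium; $\Psi(k,x_0,\mathbf u(k))$ is the state at time $k$ from $x_0$ under control sequence $\mathbf u$. (A1) $\|f(x,u)-f(y,w)\|\le L_x\|x-y\|+L_u\|u-w\|$. Reward $r(x,u)=R-x^TQx$, $R>0$ constant, $Q$ positive definite. For $\gamma\in(0,1)$: $\mathbf J^{\mathbf u}_\gamma(x_0)=\sum_{k\ge0}\gamma^k r(\Psi(k,x_0,\mathbf u(k)),\mathbf u(k))$, $V_\gamma(x_0)=\sup_{\mathbf u}\mathbf J^{\mathbf u}_\gamma(x_0)$. (A2) For every $x_0$ an optimal control sequence attaining $V_\gamma(x_0)$ exists. (A3) There is $a_V$ with $\frac{R}{1-\gamma}-V_\gamma(x)\le a_V\|x\|^2$ for all $\gamma\in(0,1)$, $x\in\mathbb R^n$. An optimal policy is a map $\pi^\star$ such that the closed-loop inputs $u_k=\pi^\star(x_k)$ attain $V_\gamma(x_0)$ for every $x_0$. Asymptotic stability of the origin for $x_{k+1}=f(x_k,\mathbf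 u(x_k))$: (1) for every $\epsilon>0$ there is $\delta>0$ such that $\|x_0\|<\delta$ implies $x_k$ is defined and $\|x_k\|<\epsilon$ for all $k$; (2) there is $\rho>0$ such that for every $\epsilon>0$ there is $N\in\mathbb N$ with $\|x_k\|<\epsilon$ for all $k\ge N$ whenever $\|x_0\|<\rho$. *)

theory Defs
  imports "HOL-Analysis.Analysis"
begin

fun traj :: "('s \<Rightarrow> 'c \<Rightarrow> 's) \<Rightarrow> 's \<Rightarrow> (nat \<Rightarrow> 'c) \<Rightarrow> nat \<Rightarrow> 's" where
  "traj f x0 u 0 = x0"
| "traj f x0 u (Suc k) = f (traj f x0 u k) (u k)"

fun cl_traj :: "('s \<Rightarrow> 'c \<Rightarrow> 's) \<Rightarrow> ('s \<Rightarrow> 'c) \<Rightarrow> 's \<Rightarrow> nat \<Rightarrow> 's" where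
  "cl_traj f p x0 0 = x0"
| "cl_traj f p x0 (Suc k) = f (cl_traj f p x0 k) (p (cl_traj f p x0 k))"

definition reward :: "real \<Rightarrow> real^'n^'n \<Rightarrow> real^'n \<Rightarrow> real" where
  "reward R Q x = R - x \<bullet> (Q *v x)"

definition admissible :: "'c set \<Rightarrow> (nat \<Rightarrow> 'c) set" where
  "admissible U = {u. \<forall>k. u k \<in> U}"

text \<open>Discounted return J^u_gamma(x0) = sum_k gamma^k r(Psi(k,x0,u), u_k), taken as the
  limit of the partial sums in the extended reals (it exists, possibly -\<infinity>).\<close>
definition J_disc :: "(real^'n \<Rightarrow> 'c \<Rightarrow> real^'n) \<Rightarrow> real \<Rightarrow> real^'n^'n \<Rightarrow> real
    \<Rightarrow> (nat \<Rightarrow> 'c) \<Rightarrow> real^'n \<Rightarrow> ereal" where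
  "J_disc f R Q \<gamma> u x0 =
     lim (\<lambda>N. ereal (\<Sum>k<N. \<gamma> ^ k * reward R Q (traj f x0 u k)))"

definition V_disc :: "(real^'n \<Rightarrow> 'c \<Rightarrow> real^'n) \<Rightarrow> 'c set \<Rightarrow> real \<Rightarrow> real^'n^'n \<Rightarrow> real
    \<Rightarrow> real^'n \<Rightarrow> ereal" where
  "V_disc f U R Q \<gamma> x0 = (SUP u \<in> admissible U. J_disc f R Q \<gamma> u x0)"

definition optimal_policy :: "(real^'n \<Rightarrow> 'c \<Rightarrow> real^'n) \<Rightarrow> 'c set \<Rightarrow> real \<Rightarrow> real^'n^'n \<Rightarrow> real
    \<Rightarrow> (real^'n \<Rightarrow> 'c) \<Rightarrow> bool" where
  "optimal_policy f U R Q \<gamma> p \<longleftrightarrow>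
     (\<forall>x. p x \<in> U) \<and>
     (\<forall>x0. J_disc f R Q \<gamma> (\<lambda>k. p (cl_traj f p x0 k)) x0 = V_disc f U R Q \<gamma> x0)"

definition asym_stable_origin :: "(real^'n \<Rightarrow> 'c \<Rightarrow> real^'n) \<Rightarrow> (real^'n \<Rightarrow> 'c) \<Rightarrow> bool" where
  "asym_stable_origin f p \<longleftrightarrow>
     (\<forall>\<epsilon>>0. \<exists>\<delta>>0. \<forall>x0. norm x0 < \<delta> \<longrightarrow> (\<forall>k. norm (cl_traj f p x0 k) < \<epsilon>)) \<and>
     (\<exists>\<rho>>0. \<forall>\<epsilon>>0. \<exists>N::nat. \<forall>x0. norm x0 < \<rho> \<longrightarrow>
         (\<forall>k\<ge>N. norm (cl_traj f p x0 k) < \<epsilon>))"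

end

theory Submission
  imports Defs
begin

lemma Q_lower:
  fixes Q :: "real^'n^'n"
  assumes Q_pd: "\<forall>x. x \<noteq> 0 \<longrightarrow> x \<bullet> (Q *v x) > 0"
  shows "\<exists>q>0. \<forall>x. q * (norm x)\<^sup>2 \<le> x \<bullet> (Q *v x)"
proof -
  have "compact (sphere (0::real^'n) 1)" by simp
  moreover have "sphere (0::real^'n) 1 \<noteq> {}"
    using vector_choose_size[of 1] by auto
  moreover have "continuous_on (sphere (0::real^'n) 1) (\<lambda>x. x \<bullet> (Q *v x))"
    by (intro continuous_intros)
  ultimately obtain y where y: "y \<in> sphere 0 1" and ymin: "\<forall>z\<in>sphere 0 1. y \<bullet> (Q *v y) \<le> z \<bullet> (Q *v z)"
    using continuous_attains_inf by blast
  define q where "q = y \<bullet> (Q *v y)"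
  have "y \<noteq> 0" using y by auto
  hence qpos: "q > 0" using Q_pd q_def by auto
  have "q * (norm x)\<^sup>2 \<le> x \<bullet> (Q *v x)" for x
  proof (cases "x = 0")
    case True then show ?thesis by simp
  next
    case False
    define z where "z = (1 / norm x) *\<^sub>R x"
    have zs: "z \<in> sphere 0 1" using False by (simp add: z_def)
    have xz: "x = norm x *\<^sub>R z" using False by (simp add: z_def)
    have "x \<bullet> (Q *v x) = (norm x)\<^sup>2 * (z \<bullet> (Q *v z))"
      by (subst (1 2) xz) (simp add: matrix_vector_mult_scaleR power2_eq_square algebra_simps)
    moreover have "q \<le> z \<bullet> (Q *v z)" using ymin zs q_def by auto
    ultimately show ?thesis by (metis mult.commute mult_right_mono zero_le_power2)
  qed
  with qpos show ?thesis by blast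
qed

lemma J_form:
  fixes c :: "nat \<Rightarrow> real"
  assumes c: "\<And>k. c k \<ge> 0" and g: "0 < \<gamma>" "\<gamma> < 1"
    and R: "R > 0" and ne: "lim (\<lambda>N. ereal (\<Sum>k<N. \<gamma>^k * (R - c k))) \<noteq> -\<infinity>"
  shows "summable (\<lambda>k. \<gamma>^k * c k) \<and>
         lim (\<lambda>N. ereal (\<Sum>k<N. \<gamma>^k * (R - c k))) = ereal (R/(1-\<gamma>) - suminf (\<lambda>k. \<gamma>^k * c k))"
proof -
  have geo: "(\<lambda>k. \<gamma>^k * R) sums (R/(1-\<gamma>))"
    using sums_mult[OF geometric_sums[of \<gamma>], of R] g by (simp add: mult.commute)
  have split: "(\<Sum>k<N. \<gamma>^k * (R - c k)) = (\<Sum>k<N. \<gamma>^k * R) - (\<Sum>k<N. \<gamma>^k * c k)" for N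
    by (simp add: algebra_simps sum_subtractf)
  have nn: "\<And>k. 0 \<le> \<gamma>^k * c k" using c g by simp
  show ?thesis
  proof (cases "summable (\<lambda>k. \<gamma>^k * c k)")
    case True
    have "(\<lambda>k. \<gamma>^k * R - \<gamma>^k * c k) sums (R/(1-\<gamma>) - suminf (\<lambda>k. \<gamma>^k * c k))"
      using sums_diff[OF geo summable_sums[OF True]] .
    hence "(\<lambda>k. \<gamma>^k * (R - c k)) sums (R/(1-\<gamma>) - suminf (\<lambda>k. \<gamma>^k * c k))"
      by (simp add: algebra_simps)
    hence "(\<lambda>N. \<Sum>k<N. \<gamma>^k * (R - c k)) \<longlonglongrightarrow> (R/(1-\<gamma>) - suminf (\<lambda>k. \<gamma>^k * c k))"
      by (simp add: sums_def)
    hence "(\<lambda>N. ereal (\<Sum>k<N. \<gamma>^k * (R - c k))) \<longlonglongrightarrow> ereal (R/(1-\<gamma>) - suminf (\<lambda>k. \<gamma>^k * c k))"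
      by simp
    with True show ?thesis using limI by blast
  next
    case False
    have ub: "(\<Sum>k<N. \<gamma>^k * R) \<le> R/(1-\<gamma>)" for N
      using sum_le_suminf[OF sums_summable[OF geo], of "{..<N}"] g sums_unique[OF geo] R
      by auto
    have unb: "\<exists>N. (\<Sum>k<N. \<gamma>^k * c k) > B" for B
    proof (rule ccontr)
      assume "\<not> ?thesis"
      hence "\<And>N. (\<Sum>k<N. \<gamma>^k * c k) \<le> B" by (simp add: not_less)
      hence "summable (\<lambda>k. \<gamma>^k * c k)" by (rule summableI_nonneg_bounded[OF nn])
      with False show False by simp
    qed
    have mono: "(\<Sum>k<M. \<gamma>^k * c k) \<le> (\<Sum>k<N. \<gamma>^k * c k)" if "M \<le> N" for M N
      by (rule sum_mono2) (use that nn in auto)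
    have "(\<lambda>N. ereal (\<Sum>k<N. \<gamma>^k * (R - c k))) \<longlonglongrightarrow> -\<infinity>"
      unfolding tendsto_MInfty
    proof
      fix r
      obtain M where M: "(\<Sum>k<M. \<gamma>^k * c k) > R/(1-\<gamma>) - r" using unb by blast
      show "\<forall>\<^sub>F N in sequentially. ereal (\<Sum>k<N. \<gamma>^k * (R - c k)) < ereal r"
        unfolding eventually_sequentially
      proof (intro exI allI impI)
        fix N assume "M \<le> N"
        hence "(\<Sum>k<N. \<gamma>^k * c k) > R/(1-\<gamma>) - r" using M mono[of M N] by linarith
        thus "ereal (\<Sum>k<N. \<gamma>^k * (R - c k)) < ereal r" using split[of N] ub[of N] by simp
      qed
    qed
    hence "lim (\<lambda>N. ereal (\<Sum>k<N. \<gamma>^k * (R - c k))) = -\<infinity>" using limI by blast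
    with ne show ?thesis by simp
  qed
qed


lemma traj_cl: "traj f x0 (\<lambda>k. p (cl_traj f p x0 k)) k = cl_traj f p x0 k"
  by (induction k) auto

lemma cl_shift: "cl_traj f p x0 (Suc k) = cl_traj f p (f x0 (p x0)) k"
  by (induction k) auto

theorem theorem1:
  fixes f :: "real^'n \<Rightarrow> real^'m \<Rightarrow> real^'n"
    and U :: "(real^'m) set"
    and R :: real
    and Q :: "real^'n^'n"
  assumes equilibrium: "0 \<in> U" "f 0 0 = 0"
    and A1: "\<exists>Lx Lu. \<forall>x y u w. u \<in> U \<longrightarrow> w \<in> U \<longrightarrow>
               norm (f x u - f y w) \<le> Lx * norm (x - y) + Lu * norm (u - w)"
    and R_pos: "R > 0"
    and Q_pd: "\<forall>x. x \<noteq> 0 \<longrightarrow> x \<bullet> (Q *v x) > 0"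
    and A2: "\<forall>\<gamma>\<in>{0<..<1}. \<forall>x0. \<exists>u\<in>admissible U.
               J_disc f R Q \<gamma> u x0 = V_disc f U R Q \<gamma> x0"
    and A3: "\<exists>aV. \<forall>\<gamma>\<in>{0<..<1}. \<forall>x.
               ereal (R / (1 - \<gamma>)) - V_disc f U R Q \<gamma> x \<le> ereal (aV * (norm x)\<^sup>2)"
  shows "\<exists>\<gamma>s\<in>{0<..<1}. \<forall>\<gamma>\<in>{\<gamma>s<..<1}. \<forall>p.
           optimal_policy f U R Q \<gamma> p \<longrightarrow> asym_stable_origin f p"
proof -
  obtain q where q: "q > 0" "\<And>x. q * (norm x)\<^sup>2 \<le> x \<bullet> (Q *v x)"
    using Q_lower[OF Q_pd] by blast
  obtain aV where aV: "\<And>\<gamma> x. \<gamma>\<in>{0<..<1} \<Longrightarrow>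
       ereal (R / (1 - \<gamma>)) - V_disc f U R Q \<gamma> x \<le> ereal (aV * (norm x)\<^sup>2)"
    using A3 by blast
  define a where "a = max aV q"
  have a: "a > 0" "q \<le> a" "aV \<le> a" using q by (auto simp: a_def)
  define \<rho>0 where "\<rho>0 = 1 - q / a"
  have \<rho>0: "0 \<le> \<rho>0" "\<rho>0 < 1" using a q by (auto simp: \<rho>0_def field_simps)
  define \<gamma>s where "\<gamma>s = (1 + \<rho>0) / 2"
  have \<gamma>s: "\<gamma>s \<in> {0<..<1}" using \<rho>0 by (auto simp: \<gamma>s_def)
  show ?thesis
  proof (intro bexI[OF _ \<gamma>s] ballI allI impI)
    fix \<gamma> p assume \<gamma>: "\<gamma> \<in> {\<gamma>s<..<1}" and opt: "optimal_policy f U R Q \<gamma> p"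
    have g: "0 < \<gamma>" "\<gamma> < 1" "\<gamma> \<in> {0<..<1}" using \<gamma> \<gamma>s by auto
    define c where "c x = x \<bullet> (Q *v x)" for x :: "real^'n"
    define W where "W x = suminf (\<lambda>k. \<gamma>^k * c (cl_traj f p x k))" for x
    have cq: "q * (norm x)\<^sup>2 \<le> c x" for x using q c_def by auto
    have cnn: "0 \<le> c x" for x using cq[of x] q by (meson order_trans mult_nonneg_nonneg less_imp_le zero_le_power2)
    have key: "summable (\<lambda>k. \<gamma>^k * c (cl_traj f p x k)) \<and>
               V_disc f U R Q \<gamma> x = ereal (R/(1-\<gamma>) - W x)" for x
    proof -
      have J: "J_disc f R Q \<gamma> (\<lambda>k. p (cl_traj f p x k)) x = V_disc f U R Q \<gamma> x"
        using opt unfolding optimal_policy_def by blast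
      have J2: "J_disc f R Q \<gamma> (\<lambda>k. p (cl_traj f p x k)) x =
          lim (\<lambda>N. ereal (\<Sum>k<N. \<gamma>^k * (R - c (cl_traj f p x k))))"
        unfolding J_disc_def traj_cl reward_def c_def ..
      have "V_disc f U R Q \<gamma> x \<noteq> -\<infinity>"
      proof
        assume "V_disc f U R Q \<gamma> x = -\<infinity>"
        with aV[OF g(3), of x] show False by simp
      qed
      hence "lim (\<lambda>N. ereal (\<Sum>k<N. \<gamma>^k * (R - c (cl_traj f p x k)))) \<noteq> -\<infinity>"
        using J J2 by simp
      from J_form[of "\<lambda>k. c (cl_traj f p x k)", OF cnn g(1,2) R_pos this]
      show ?thesis using J J2 W_def by simp
    qed
    have Wle: "W x \<le> a * (norm x)\<^sup>2" for x
    proof -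
      have "ereal (R / (1 - \<gamma>)) - ereal (R/(1-\<gamma>) - W x) \<le> ereal (aV * (norm x)\<^sup>2)"
        using aV[OF g(3), of x] key[of x] by simp
      hence "W x \<le> aV * (norm x)\<^sup>2" by simp
      also have "\<dots> \<le> a * (norm x)\<^sup>2" using a by (simp add: mult_right_mono)
      finally show ?thesis .
    qed
    have Wnn: "0 \<le> W x" for x
      unfolding W_def using g cnn by (intro suminf_nonneg) (use key in auto)
    have Wrec: "\<gamma> * W (f x (p x)) = W x - c x" for x
    proof -
      have s: "summable (\<lambda>k. \<gamma>^k * c (cl_traj f p x k))" using key by blast
      have "(\<Sum>n. \<gamma>^(Suc n) * c (cl_traj f p x (Suc n))) = W x - c x"
        using suminf_split_head[OF s] unfolding W_def by simp
      moreover have "(\<Sum>n. \<gamma>^(Suc n) * c (cl_traj f p x (Suc n))) = \<gamma> * W (f x (p x))"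
        unfolding W_def cl_shift
        using suminf_mult[of "\<lambda>n. \<gamma>^n * c (cl_traj f p (f x (p x)) n)" \<gamma>] key[of "f x (p x)"]
        by (simp add: mult.assoc)
      ultimately show ?thesis by simp
    qed
    define \<rho> where "\<rho> = \<rho>0 / \<gamma>"
    have \<rho>: "0 \<le> \<rho>" "\<rho> < 1" using \<rho>0 g \<gamma> by (auto simp: \<rho>_def \<gamma>s_def field_simps)
    have step: "W (f x (p x)) \<le> \<rho> * W x" for x
    proof -
      have "q / a * W x \<le> q / a * (a * (norm x)\<^sup>2)"
        using Wle[of x] a q by (intro mult_left_mono) auto
      also have "\<dots> = q * (norm x)\<^sup>2" using a by simp
      finally have "q / a * W x \<le> c x" using cq[of x] by linarith
      hence "\<gamma> * W (f x (p x)) \<le> \<rho>0 * W x" using Wrec[of x] by (simp add: \<rho>0_def algebra_simps)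
      thus ?thesis using g by (simp add: \<rho>_def field_simps mult.commute)
    qed
    have decay: "W (cl_traj f p x0 k) \<le> \<rho>^k * W x0" for x0 k
    proof (induction k)
      case 0 then show ?case by simp
    next
      case (Suc k)
      have "W (cl_traj f p x0 (Suc k)) \<le> \<rho> * W (cl_traj f p x0 k)" using step by simp
      also have "\<dots> \<le> \<rho> * (\<rho>^k * W x0)" using Suc \<rho> by (intro mult_left_mono) auto
      finally show ?case by simp
    qed
    have bound: "(norm (cl_traj f p x0 k))\<^sup>2 \<le> (a / q) * \<rho>^k * (norm x0)\<^sup>2" for x0 k
    proof -
      let ?x = "cl_traj f p x0 k"
      have "q * (norm ?x)\<^sup>2 \<le> c ?x" by (rule cq)
      also have "\<dots> \<le> W ?x" using Wrec[of ?x] Wnn[of "f ?x (p ?x)"] g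
        by (smt (verit) mult_nonneg_nonneg)
      also have "\<dots> \<le> \<rho>^k * W x0" by (rule decay)
      also have "\<dots> \<le> \<rho>^k * (a * (norm x0)\<^sup>2)" using Wle[of x0] \<rho> by (intro mult_left_mono) auto
      finally have "q * (norm ?x)\<^sup>2 \<le> \<rho>^k * (a * (norm x0)\<^sup>2)" .
      thus ?thesis using q by (simp add: field_simps)
    qed
    show "asym_stable_origin f p"
      unfolding asym_stable_origin_def
    proof (intro conjI allI impI)
      fix \<epsilon> :: real assume e: "\<epsilon> > 0"
      define \<delta> where "\<delta> = \<epsilon> * sqrt (q / a)"
      have d: "\<delta> > 0" using e q a by (simp add: \<delta>_def)
      show "\<exists>\<delta>>0. \<forall>x0. norm x0 < \<delta> \<longrightarrow> (\<forall>k. norm (cl_traj f p x0 k) < \<epsilon>)"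
      proof (intro exI[of _ \<delta>] conjI d allI impI)
        fix x0 :: "real^'n" and k assume x0: "norm x0 < \<delta>"
        have "(norm x0)\<^sup>2 < \<delta>\<^sup>2" using x0 by (simp add: power_strict_mono)
        also have "\<delta>\<^sup>2 = \<epsilon>\<^sup>2 * (q / a)" using q a by (simp add: \<delta>_def power_mult_distrib)
        finally have "(a / q) * (norm x0)\<^sup>2 < \<epsilon>\<^sup>2" using q a by (simp add: field_simps)
        moreover have "\<rho>^k \<le> 1" using \<rho> by (simp add: power_le_one)
        hence "(a / q) * \<rho>^k * (norm x0)\<^sup>2 \<le> (a / q) * (norm x0)\<^sup>2"
          using q a \<open>\<rho>^k \<le> 1\<close> \<rho>
          by (intro mult_right_mono) (auto intro!: divide_right_mono mult_left_le)
        ultimately have "(norm (cl_traj f p x0 k))\<^sup>2 < \<epsilon>\<^sup>2" using bound[of x0 k] by linarith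
        thus "norm (cl_traj f p x0 k) < \<epsilon>" using e by (meson power_less_imp_less_base less_imp_le)
      qed
    next
      show "\<exists>\<rho>>0. \<forall>\<epsilon>>0. \<exists>N::nat. \<forall>x0. norm x0 < \<rho> \<longrightarrow>
         (\<forall>k\<ge>N. norm (cl_traj f p x0 k) < \<epsilon>)"
      proof (intro exI[of _ "1::real"] conjI allI impI)
        fix \<epsilon> :: real assume e: "\<epsilon> > 0"
        have "\<exists>N. \<rho>^N < \<epsilon>\<^sup>2 * (q / a)"
          using real_arch_pow_inv[of "\<epsilon>\<^sup>2 * (q / a)" \<rho>] \<rho> e q a by (cases "\<rho> = 0") auto
        then obtain N where N: "\<rho>^N < \<epsilon>\<^sup>2 * (q / a)" by blast
        show "\<exists>N::nat. \<forall>x0. norm x0 < 1 \<longrightarrow> (\<forall>k\<ge>N. norm (cl_traj f p x0 k) < \<epsilon>)"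
        proof (intro exI[of _ N] allI impI)
          fix x0 :: "real^'n" and k :: nat assume x0: "norm x0 < 1" and k: "N \<le> k"
          have "\<rho>^k \<le> \<rho>^N" using \<rho> k by (simp add: power_decreasing)
          have n2: "(norm x0)\<^sup>2 \<le> 1" using x0 by (simp add: power_le_one)
          have "(a / q) * \<rho>^k * (norm x0)\<^sup>2 \<le> (a / q) * \<rho>^N * 1"
            using \<open>\<rho>^k \<le> \<rho>^N\<close> n2 q a \<rho> by (intro mult_mono) auto
          also have "\<dots> < \<epsilon>\<^sup>2" using N q a by (simp add: field_simps)
          finally have "(norm (cl_traj f p x0 k))\<^sup>2 < \<epsilon>\<^sup>2" using bound[of x0 k] by linarith
          thus "norm (cl_traj f p x0 k) < \<epsilon>" using e by (meson power_less_imp_less_base less_imp_le)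
        qed
      qed simp
    qed
  qed
qed

end
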